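(* Let $\mathcal A$ be a unital $C^*$-algebra and $\mathcal F\subseteq\mathcal A$ an algebra of finite type elements. An element $a\in\mathcal A$ is of Fredholm type if and only if $a$ is invertible modulo $\mathcal F$, i.e. there exist $b_1,b_2\in\mathcal A$ with $ab_1-1\in\mathcal F$ and $b_2a-1\in\mathcal F$.
   Context: Let $\mathcal A$ be a unital $C^*$-algebra. A subalgebra $\mathcal F\subseteq\mathcal A$ is an algebra of finite type elements if: (i) $\mathcal F$ is a self-adjoint two-sided ideal of $\mathcal A$; (ii) $\mathcal F$ has an approximate unit consisting of projections, i.e. a net $(p_\alpha)$ of projections in $\mathcal F$ with $\|f-p_\alpha f\|\to0$ and $\|f-fp_\alpha\|\to0$ for every $f\in\mathcal F$; (iii) for any projections $p,q\in\mathcal F$ there is $v\in\mathcal A$ with $vv^*=q$ and $v^*vp=0$. For $a\in\mathcal A$ and projections $p,q\in\mathcal A$, $a$ is invertible up to $(p,q)$ if there is $b\in\mathcal A$ with $b=(1-p)b(1-q)$, $(1-q)a(1-p)b=1-q$ and $b(1-q)a(1-p)=1-p$. $a$ is of Fredholm type if it is invertible up to $(p,q)$ for some projections $p,q\in\mathcal F$. *)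

theory Defs
  imports "HOL-Analysis.Analysis"
begin

text \<open>Unital C*-algebras: complete normed unital algebras (over the reals, as in the
library) carrying a compatible complex scalar multiplication and an involution
satisfying the C*-identity.\<close>

class cstar_algebra = real_normed_algebra_1 + banach +
  fixes scaleC :: "complex \<Rightarrow> 'a \<Rightarrow> 'a"
    and cstar :: "'a \<Rightarrow> 'a"
  assumes scaleC_of_real: "scaleC (complex_of_real r) x = scaleR r x"
    and scaleC_add_right: "scaleC c (x + y) = scaleC c x + scaleC c y"
    and scaleC_add_left: "scaleC (c + d) x = scaleC c x + scaleC d x"
    and scaleC_scaleC: "scaleC c (scaleC d x) = scaleC (c * d) x"
    and scaleC_one: "scaleC 1 x = x"
    and norm_scaleC: "norm (scaleC c x) = cmod c * norm x"
    and scaleC_mult_left: "scaleC c (x * y) = scaleC c x * y"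
    and scaleC_mult_right: "scaleC c (x * y) = x * scaleC c y"
    and cstar_cstar: "cstar (cstar x) = x"
    and cstar_add: "cstar (x + y) = cstar x + cstar y"
    and cstar_mult: "cstar (x * y) = cstar y * cstar x"
    and cstar_scaleC: "cstar (scaleC c x) = scaleC (cnj c) (cstar x)"
    and cstar_identity: "norm (cstar x * x) = (norm x)^2"

definition is_proj :: "'a::cstar_algebra \<Rightarrow> bool" where
  "is_proj p \<longleftrightarrow> p * p = p \<and> cstar p = p"

text \<open>Algebra of finite type elements. The approximate unit (a net of projections)
is expressed by a proper filter, Isabelle's standard notion of net.\<close>

definition finite_type_algebra :: "'a::cstar_algebra set \<Rightarrow> bool" where
  "finite_type_algebra F \<longleftrightarrow>
     \<comment> \<open>(i) self-adjoint two-sided ideal (in particular a complex subalgebra)\<close>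
     0 \<in> F \<and> (\<forall>x\<in>F. \<forall>y\<in>F. x + y \<in> F) \<and> (\<forall>c. \<forall>x\<in>F. scaleC c x \<in> F) \<and>
     (\<forall>a. \<forall>x\<in>F. a * x \<in> F \<and> x * a \<in> F) \<and> (\<forall>x\<in>F. cstar x \<in> F) \<and>
     \<comment> \<open>(ii) approximate unit of projections\<close>
     (\<exists>U :: 'a filter. U \<noteq> bot \<and> eventually (\<lambda>p. p \<in> F \<and> is_proj p) U \<and>
        (\<forall>f\<in>F. ((\<lambda>p. norm (f - p * f)) \<longlongrightarrow> 0) U \<and>
                 ((\<lambda>p. norm (f - f * p)) \<longlongrightarrow> 0) U)) \<and>
     \<comment> \<open>(iii)\<close>
     (\<forall>p q. p \<in> F \<and> is_proj p \<and> q \<in> F \<and> is_proj q \<longrightarrow>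
        (\<exists>v. v * cstar v = q \<and> cstar v * v * p = 0))"

definition invertible_upto :: "'a::cstar_algebra \<Rightarrow> 'a \<Rightarrow> 'a \<Rightarrow> bool" where
  "invertible_upto a p q \<longleftrightarrow>
     (\<exists>b. b = (1 - p) * b * (1 - q) \<and>
          (1 - q) * a * (1 - p) * b = 1 - q \<and>
          b * (1 - q) * a * (1 - p) = 1 - p)"

definition fredholm_type :: "'a::cstar_algebra set \<Rightarrow> 'a \<Rightarrow> bool" where
  "fredholm_type F a \<longleftrightarrow>
     (\<exists>p q. p \<in> F \<and> is_proj p \<and> q \<in> F \<and> is_proj q \<and> invertible_upto a p q)"

end

theory Submission
  imports Defs
begin

lemma neumann:
  fixes y :: "'a::{real_normed_algebra_1,banach}"
  assumes "norm y < 1"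
  shows "\<exists>u. (1 - y) * u = 1 \<and> u * (1 - y) = 1"
proof -
  have sm: "summable (\<lambda>n. y ^ n)"
    by (rule summable_comparison_test'[where g="\<lambda>n. norm y ^ n" and N=0])
       (use assms norm_power_ineq in auto)
  then have s: "(\<lambda>n. y ^ n) sums suminf (\<lambda>n. y ^ n)" by (rule summable_sums)
  have t: "(\<lambda>n. y ^ n - y ^ Suc n) sums (y ^ 0 - 0)"
    by (rule telescope_sums') (rule LIMSEQ_power_zero[OF assms])
  have "(\<lambda>n. (1 - y) * y ^ n) sums ((1 - y) * suminf (\<lambda>n. y ^ n))" by (rule sums_mult[OF s])
  moreover have "(\<lambda>n. (1 - y) * y ^ n) = (\<lambda>n. y ^ n - y ^ Suc n)"
    by (simp add: algebra_simps)
  ultimately have 1: "(1 - y) * suminf (\<lambda>n. y ^ n) = 1" using t sums_unique2 by fastforce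
  have "(\<lambda>n. y ^ n * (1 - y)) sums (suminf (\<lambda>n. y ^ n) * (1 - y))" by (rule sums_mult2[OF s])
  moreover have "(\<lambda>n. y ^ n * (1 - y)) = (\<lambda>n. y ^ n - y ^ Suc n)"
    by (simp add: algebra_simps power_commutes)
  ultimately have 2: "suminf (\<lambda>n. y ^ n) * (1 - y) = 1" using t sums_unique2 by fastforce
  from 1 2 show ?thesis by blast
qed

definition invtb :: "'a::cstar_algebra \<Rightarrow> bool" where
  "invtb z \<longleftrightarrow> (\<exists>u. z * u = 1 \<and> u * z = 1)"

lemma invtb_mult: "invtb x \<Longrightarrow> invtb y \<Longrightarrow> invtb (x * y)"
  unfolding invtb_def
proof (elim exE conjE)
  fix u v assume "x * u = 1" "u * x = 1" "y * v = 1" "v * y = 1"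
  then show "\<exists>w. x * y * w = 1 \<and> w * (x * y) = 1"
    by (intro exI[of _ "v * u"]) (metis mult.assoc mult_1_left)
qed

lemma invtb_neumann: "norm y < 1 \<Longrightarrow> invtb (1 + (y::'a::cstar_algebra))"
  using neumann[of "-y"] unfolding invtb_def by simp

lemma invtb_minus: "invtb x \<Longrightarrow> invtb (-x)"
  unfolding invtb_def by (metis minus_mult_minus)

lemma scaleC_zero_left[simp]: "scaleC 0 x = 0"
  using scaleC_of_real[of 0 x] by simp

lemma scaleC_minus_left: "scaleC (-c) x = - scaleC c x"
  using scaleC_add_left[of c "-c" x] by (simp add: eq_neg_iff_add_eq_0 add.commute)

lemma cstar_zero[simp]: "cstar 0 = (0::'a::cstar_algebra)"
  using cstar_add[of "0::'a" 0] by simp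

lemma cstar_minus: "cstar (-x) = - cstar (x::'a::cstar_algebra)"
  using cstar_add[of x "-x"] by (simp add: eq_neg_iff_add_eq_0 add.commute)

lemma cstar_diff: "cstar (x - y) = cstar x - cstar (y::'a::cstar_algebra)"
  using cstar_add[of x "-y"] cstar_minus[of y] by simp

lemma cstar_one[simp]: "cstar 1 = (1::'a::cstar_algebra)"
  by (metis cstar_cstar cstar_mult mult_1_right)

lemma cstar_scaleR: "cstar (scaleR r x) = scaleR r (cstar (x::'a::cstar_algebra))"
  by (metis cstar_scaleC scaleC_of_real complex_cnj_complex_of_real)

lemma norm_cstar_le: "norm (cstar x) \<ge> norm (x::'a::cstar_algebra)"
proof (cases "x = 0")
  case False
  have "(norm x)^2 \<le> norm (cstar x) * norm x"
    using cstar_identity[of x] norm_mult_ineq[of "cstar x" x] by simp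
  then show ?thesis using False by (simp add: power2_eq_square)
qed simp

lemma norm_cstar[simp]: "norm (cstar x) = norm (x::'a::cstar_algebra)"
  using norm_cstar_le[of x] norm_cstar_le[of "cstar x"] by (simp add: cstar_cstar)

lemma norm_proj_le: "is_proj p \<Longrightarrow> norm p \<le> 1"
  using cstar_identity[of p] unfolding is_proj_def
  by (cases "norm p = 0") (auto simp: power2_eq_square)

lemma is_proj_compl: "is_proj p \<Longrightarrow> is_proj (1 - p)"
  unfolding is_proj_def by (simp add: cstar_diff algebra_simps)

definition jj :: "'a::cstar_algebra" where "jj = scaleC \<i> 1"

lemma jj_comm: "jj * x = x * (jj::'a::cstar_algebra)"
  unfolding jj_def by (metis mult_1_left mult_1_right scaleC_mult_left scaleC_mult_right)

lemma jj_sq: "jj * jj = -(1::'a::cstar_algebra)"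
proof -
  have "jj * jj = scaleC \<i> (jj::'a)" unfolding jj_def by (metis mult_1_left scaleC_mult_left)
  also have "\<dots> = scaleC (-1) 1" unfolding jj_def by (simp add: scaleC_scaleC)
  also have "\<dots> = -1" using scaleC_minus_left[of 1 "1::'a"] by (simp add: scaleC_one)
  finally show ?thesis .
qed

lemma cstar_jj: "cstar jj = -(jj::'a::cstar_algebra)"
  unfolding jj_def by (simp add: cstar_scaleC scaleC_minus_left)

lemma norm_jj: "norm (jj::'a::cstar_algebra) = 1"
  unfolding jj_def by (simp add: norm_scaleC)

lemma invtb_sa_minus_jj:
  fixes s :: "'a::cstar_algebra"
  assumes sa: "cstar s = s"
  shows "invtb (s - jj)"
proof -
  define t where "t = (norm s)^2"
  have t0: "t \<ge> 0" unfolding t_def by simp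
  define x where "x = s + scaleR t jj"
  have cx: "cstar x = s - scaleR t jj" unfolding x_def
    by (simp add: cstar_add cstar_scaleR sa cstar_jj)
  have sj: "s * jj = jj * s" by (simp add: jj_comm)
  have "cstar x * x = (s - scaleR t jj) * (s + scaleR t jj)" by (subst cx) (simp add: x_def)
  also have "\<dots> = s * s + scaleR (t^2) 1"
    by (simp add: algebra_simps sj jj_sq power2_eq_square)
  finally have "norm (cstar x * x) \<le> norm (s * s) + t^2"
    using norm_triangle_ineq[of "s * s" "scaleR (t^2) 1"] by simp
  also have "\<dots> \<le> t + t^2" using norm_mult_ineq[of s s] unfolding t_def by (simp add: power2_eq_square)
  finally have "(norm x)^2 \<le> t + t^2" by (simp add: cstar_identity)
  also have "\<dots> < (1 + t)^2" using t0 by (simp add: power2_eq_square algebra_simps)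
  finally have nx: "norm x < 1 + t"
    using t0 by (smt (verit) norm_ge_zero power_mono)
  define c where "c = 1 + t"
  have c0: "c > 0" unfolding c_def using t0 by simp
  define y where "y = scaleR (1/c) (jj * x)"
  have ny: "norm y < 1" unfolding y_def using c0 nx norm_mult_ineq[of jj x]
    by (simp add: norm_jj c_def divide_simps)
  have jj2: "jj * (jj * z) = - z" for z :: 'a
    by (simp add: mult.assoc[symmetric] jj_sq)
  have "scaleR (-c) jj * (1 + y) = scaleR (-c) jj + scaleR (-c) jj * y"
    by (simp add: distrib_left)
  also have "scaleR (-c) jj * y = x" unfolding y_def using c0
    by (simp add: jj2)
  finally have eq: "s - jj = scaleR (-c) jj * (1 + y)"
    unfolding x_def c_def by (simp add: algebra_simps)
  have "invtb (scaleR (-c) (jj::'a))" unfolding invtb_def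
    using c0 by (intro exI[of _ "scaleR (1/c) jj"]) (simp add: jj_sq)
  then show ?thesis unfolding eq using invtb_mult invtb_neumann[OF ny] by blast
qed

lemma invtb_z:
  fixes w :: "'a::cstar_algebra"
  assumes "cstar w = - w"
  shows "invtb (1 - w * w)"
proof -
  define s where "s = jj * w"
  have sa: "cstar s = s" unfolding s_def using assms
    by (simp add: cstar_mult cstar_jj jj_comm)
  have sa': "cstar (-s) = -s" using sa by (simp add: cstar_minus)
  have jj2: "jj * (jj * z) = - z" for z :: 'a
    by (simp add: mult.assoc[symmetric] jj_sq)
  have 1: "invtb (s - jj)" by (rule invtb_sa_minus_jj[OF sa])
  have 2: "invtb (s + jj)" using invtb_minus[OF invtb_sa_minus_jj[OF sa']] by (simp add: add.commute)
  have "(s + jj) * (s - jj) = s * s - s * jj + jj * s - jj * jj"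
    by (simp add: algebra_simps)
  also have "\<dots> = s * s + 1" by (simp add: jj_comm[of s] jj_sq)
  also have "s * s = - (w * w)"
  proof -
    have "jj * w * (jj * w) = jj * (w * jj) * w" by (simp add: mult.assoc)
    also have "\<dots> = jj * (jj * w) * w" by (simp add: jj_comm[of w])
    finally show ?thesis unfolding s_def by (simp add: jj2)
  qed
  finally have "(s + jj) * (s - jj) = 1 - w * w" by simp
  with invtb_mult[OF 2 1] show ?thesis by simp
qed

lemma range_proj:
  fixes g :: "'a::cstar_algebra"
  assumes gg: "g * g = g"
  shows "\<exists>q. is_proj q \<and> q * g = g \<and> g * q = q"
proof -
  define h where "h = cstar g"
  have hh: "h * h = h" unfolding h_def by (metis gg cstar_mult)
  have ch: "cstar h = g" unfolding h_def by (rule cstar_algebra_class.cstar_cstar)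
  have gg': "g * (g * x) = g * x" for x by (simp add: mult.assoc[symmetric] gg)
  have hh': "h * (h * x) = h * x" for x by (simp add: mult.assoc[symmetric] hh)
  define w where "w = g - h"
  have cw: "cstar w = - w" unfolding w_def by (simp add: cstar_diff ch h_def[symmetric])
  define z where "z = 1 - w * w"
  have zi: "invtb z" unfolding z_def by (rule invtb_z[OF cw])
  have zexp: "z = 1 - g - h + h * g + g * h" unfolding z_def w_def
    by (simp add: algebra_simps gg hh)
  have gz: "g * z = g * h * g" unfolding zexp by (simp add: algebra_simps gg gg')
  have zg: "z * g = g * h * g" unfolding zexp by (simp add: algebra_simps gg gg')
  have hz: "h * z = h * g * h" unfolding zexp by (simp add: algebra_simps hh hh')
  have zh: "z * h = h * g * h" unfolding zexp by (simp add: algebra_simps hh hh')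
  obtain u where zu: "z * u = 1" and uz: "u * z = 1" using zi unfolding invtb_def by blast
  have comm: "u * x = x * u" if "z * x = x * z" for x
  proof -
    have "u * x = u * x * (z * u)" by (simp add: zu)
    also have "\<dots> = u * (x * z) * u" by (simp add: mult.assoc)
    also have "\<dots> = u * (z * x) * u" using that by simp
    also have "\<dots> = (u * z) * x * u" by (simp add: mult.assoc)
    finally show ?thesis by (simp add: uz)
  qed
  have ug: "u * g = g * u" using comm gz zg by simp
  have uh: "u * h = h * u" using comm hz zh by simp
  have cz: "cstar z = z" unfolding z_def by (simp add: cstar_diff cstar_mult cw)
  have cu: "cstar u = u"
  proof -
    have "cstar u * z = 1" using zu by (metis cstar_mult cz cstar_one)
    then have "cstar u * z * u = u" by simp
    then show ?thesis by (simp add: mult.assoc zu)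
  qed
  define q where "q = g * h * u"
  have qg: "q * g = g"
  proof -
    have "q * g = g * h * g * u" unfolding q_def by (simp add: mult.assoc ug)
    also have "\<dots> = g * z * u" by (simp add: gz)
    finally show ?thesis by (simp add: mult.assoc zu)
  qed
  have gq: "g * q = q" unfolding q_def by (simp add: mult.assoc gg')
  have qq: "q * q = q" proof -
    have "q * q = (q * g) * (h * u)" unfolding q_def by (simp add: mult.assoc)
    also have "\<dots> = g * (h * u)" by (simp only: qg)
    finally show ?thesis by (simp add: q_def mult.assoc)
  qed
  have cq: "cstar q = q" unfolding q_def
    by (simp add: cstar_mult cu ch h_def[symmetric] mult.assoc ug uh)
  show ?thesis using qq cq qg gq unfolding is_proj_def by blast
qed

lemma fta_props:
  assumes "finite_type_algebra F"
  shows "0 \<in> F" "\<And>x y. x \<in> F \<Longrightarrow> y \<in> F \<Longrightarrow> x + y \<in> F"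
    "\<And>x y. x \<in> F \<Longrightarrow> y \<in> F \<Longrightarrow> x - y \<in> F"
    "\<And>x c. x \<in> F \<Longrightarrow> c * x \<in> F" "\<And>x c. x \<in> F \<Longrightarrow> x * c \<in> F"
    "\<exists>U :: 'a::cstar_algebra filter. U \<noteq> bot \<and> eventually (\<lambda>p. p \<in> F \<and> is_proj p) U \<and>
        (\<forall>f\<in>F. ((\<lambda>p. norm (f - p * f)) \<longlongrightarrow> 0) U \<and>
                 ((\<lambda>p. norm (f - f * p)) \<longlongrightarrow> 0) U)"
proof -
  note d = assms[unfolded finite_type_algebra_def]
  show "0 \<in> F" using d by blast
  show add: "\<And>x y. x \<in> F \<Longrightarrow> y \<in> F \<Longrightarrow> x + y \<in> F" using d by blast
  show "\<And>x c. x \<in> F \<Longrightarrow> c * x \<in> F" using d by blast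
  show "\<And>x c. x \<in> F \<Longrightarrow> x * c \<in> F" using d by blast
  show "\<exists>U :: 'a::cstar_algebra filter. U \<noteq> bot \<and> eventually (\<lambda>p. p \<in> F \<and> is_proj p) U \<and>
        (\<forall>f\<in>F. ((\<lambda>p. norm (f - p * f)) \<longlongrightarrow> 0) U \<and>
                 ((\<lambda>p. norm (f - f * p)) \<longlongrightarrow> 0) U)" using d by blast
  fix x y assume x: "x \<in> F" and y: "y \<in> F"
  have "scaleC (-1) y \<in> F" using d y by blast
  moreover have "scaleC (-1) y = - y" using scaleC_minus_left[of 1 y] by (simp add: scaleC_one)
  ultimately show "x - y \<in> F" using add[OF x, of "-y"] by simp
qed

theorem mainTheorem5:
  fixes F :: "'a::cstar_algebra set" and a :: 'a
  assumes "finite_type_algebra F"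
  shows "fredholm_type F a \<longleftrightarrow> (\<exists>b1 b2. a * b1 - 1 \<in> F \<and> b2 * a - 1 \<in> F)"
proof
  note Fp = fta_props[OF assms]
  assume "fredholm_type F a"
  then obtain p q b where p: "p \<in> F" "is_proj p" and q: "q \<in> F" "is_proj q"
    and b1: "b = (1 - p) * b * (1 - q)" and b2: "(1 - q) * a * (1 - p) * b = 1 - q"
    and b3: "b * (1 - q) * a * (1 - p) = 1 - p"
    unfolding fredholm_type_def invertible_upto_def by blast
  have pp: "(1 - p) * (1 - p) = 1 - p" and qq: "(1 - q) * (1 - q) = 1 - q"
    using p q is_proj_compl unfolding is_proj_def by auto
  have Pb: "(1 - p) * b = b"
    by (subst (2) b1, subst b1) (simp add: mult.assoc[symmetric] pp)
  have bQ: "b * (1 - q) = b"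
    by (subst (2) b1, subst b1) (simp add: mult.assoc qq)
  have "a * b - 1 = a * (1 - p) * b - 1" by (simp add: mult.assoc Pb)
  also have "\<dots> = ((1 - q) + q) * a * (1 - p) * b - 1" by simp
  also have "\<dots> = q * (a * (1 - p) * b) - q"
    using b2 by (simp add: distrib_right mult.assoc algebra_simps)
  finally have 1: "a * b - 1 \<in> F" using Fp q by simp
  have "b * a - 1 = b * (1 - q) * a * ((1 - p) + p) - 1" by (simp add: bQ)
  also have "\<dots> = (b * (1 - q) * a) * p - p"
    using b3 by (simp add: distrib_left mult.assoc algebra_simps)
  finally have 2: "b * a - 1 \<in> F" using Fp p by simp
  show "\<exists>b1 b2. a * b1 - 1 \<in> F \<and> b2 * a - 1 \<in> F" using 1 2 by blast
next
  note Fp = fta_props[OF assms]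
  assume "\<exists>b1 b2. a * b1 - 1 \<in> F \<and> b2 * a - 1 \<in> F"
  then obtain b1 b where h1: "a * b1 - 1 \<in> F" and h2: "b * a - 1 \<in> F" by blast
  define f1 where "f1 = a * b - 1"
  define f2 where "f2 = b * a - 1"
  have "a * b - 1 = (a * b1 - 1) + (a * b * (1 - a * b1) + a * (b * a - 1) * b1)"
    by (simp add: algebra_simps)
  also have "\<dots> \<in> F"
  proof -
    have "1 - a * b1 \<in> F" using Fp(3)[OF Fp(1) h1] by simp
    then show ?thesis using Fp h1 h2 by (simp add: mult.assoc)
  qed
  finally have f1F: "f1 \<in> F" unfolding f1_def .
  have f2F: "f2 \<in> F" unfolding f2_def by (rule h2)
  obtain U :: "'a filter" where U: "U \<noteq> bot" "eventually (\<lambda>p. p \<in> F \<and> is_proj p) U"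
    and lim: "((\<lambda>p. norm (f2 - f2 * p)) \<longlongrightarrow> 0) U"
    using Fp(6) f2F by blast
  have "eventually (\<lambda>p. norm (f2 - f2 * p) < 1) U"
    using order_tendstoD(2)[OF lim] by simp
  with U obtain e where e: "e \<in> F" "is_proj e" and ne: "norm (f2 - f2 * e) < 1"
    using eventually_happens'[OF U(1) eventually_conj[OF U(2)]] by blast
  define P where "P = 1 - e"
  have PP: "P * P = P" and cP: "cstar P = P" using is_proj_compl[OF e(2)] unfolding P_def is_proj_def by auto
  have ee: "e * e = e" using e unfolding is_proj_def by auto
  have Pe: "P * e = 0" and eP: "e * P = 0" unfolding P_def by (simp_all add: algebra_simps ee)
  have nP: "norm P \<le> 1" using is_proj_compl[OF e(2)] norm_proj_le unfolding P_def by blast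
  define y where "y = P * f2 * P"
  have "norm y \<le> norm P * norm (f2 * P)" unfolding y_def using norm_mult_ineq[of P "f2 * P"]
    by (simp add: mult.assoc)
  also have "\<dots> \<le> norm (f2 * P)" using nP by (simp add: mult_left_le_one_le)
  also have "f2 * P = f2 - f2 * e" unfolding P_def by (simp add: algebra_simps)
  finally have ny: "norm y < 1" using ne by simp
  obtain z where z1: "(1 + y) * z = 1" and z2: "z * (1 + y) = 1"
    using invtb_neumann[OF ny] unfolding invtb_def by blast
  have ye: "y * e = 0" unfolding y_def by (simp add: mult.assoc Pe)
  have ze: "z * e = e"
  proof -
    have "(1 + y) * e = e" by (simp add: distrib_right ye)
    then have "z * ((1 + y) * e) = z * e" by simp
    then show ?thesis by (simp add: mult.assoc[symmetric] z2)
  qed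
  define L where "L = P * z * P * b"
  have ba: "b * a = 1 + f2" unfolding f2_def by simp
  have PbaP: "P * (b * a) * P = P + y" unfolding y_def ba
    by (simp add: distrib_left distrib_right PP)
  have LaP: "L * a * P = P"
  proof -
    have "L * a * P = P * z * (P * (b * a) * P)" unfolding L_def by (simp add: mult.assoc)
    also have "\<dots> = P * z * (P + y)" by (simp only: PbaP)
    also have "P + y = (1 + y) - e" unfolding P_def by simp
    also have "P * z * ((1 + y) - e) = P * (z * (1 + y)) - P * (z * e)"
      by (simp add: right_diff_distrib mult.assoc)
    also have "\<dots> = P" by (simp add: z2 ze Pe)
    finally show ?thesis .
  qed
  have PL: "P * L = L" unfolding L_def by (simp add: mult.assoc[symmetric] PP)
  define g where "g = 1 - a * P * L"
  have gg: "g * g = g"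
  proof -
    have "a * P * L * (a * P * L) = a * P * (L * a * P) * L" by (simp add: mult.assoc)
    also have "\<dots> = a * P * P * L" by (simp only: LaP)
    also have "\<dots> = a * P * L" by (simp only: PP mult.assoc)
    finally show ?thesis unfolding g_def by (simp add: algebra_simps)
  qed
  have gaP: "g * a * P = 0"
  proof -
    have "a * P * L * a * P = a * P * (L * a * P)" by (simp only: mult.assoc)
    also have "\<dots> = a * P * P" by (simp only: LaP)
    also have "\<dots> = a * P" by (simp only: mult.assoc PP)
    finally have "a * P * L * a * P = a * P" .
    then show ?thesis unfolding g_def by (simp add: algebra_simps)
  qed
  have Lg: "L * g = 0"
  proof -
    have "L * (a * P * L) = (L * a * P) * L" by (simp only: mult.assoc)
    also have "\<dots> = L" by (simp only: LaP PL)
    finally have "L * (a * P * L) = L" .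
    then show ?thesis unfolding g_def by (simp add: algebra_simps)
  qed
  have gF: "g \<in> F"
  proof -
    have "g * a = g * a * (P + e)" unfolding P_def by simp
    also have "\<dots> = g * a * e" using gaP by (simp add: distrib_left)
    finally have ga: "g * a = g * a * e" .
    have "g = g * (a * b) - g * f1" unfolding f1_def by (simp add: algebra_simps)
    also have "\<dots> = g * a * e * b - g * f1" by (simp add: mult.assoc[symmetric] ga[symmetric])
    moreover have "g * a * e * b - g * f1 \<in> F"
      by (rule Fp(3)[OF Fp(5)[OF Fp(4)[OF e(1)]] Fp(4)[OF f1F]])
    ultimately show ?thesis by simp
  qed
  obtain q where q: "is_proj q" and qg: "q * g = g" and gq: "g * q = q"
    using range_proj[OF gg] by blast
  have qF: "q \<in> F" using Fp(5)[OF gF, of q] gq by simp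
  define Q where "Q = 1 - q"
  have QQ: "Q * Q = Q" using is_proj_compl[OF q] unfolding Q_def is_proj_def by auto
  have Qg: "Q * g = 0" unfolding Q_def by (simp add: algebra_simps qg)
  have aPL: "a * P * L = 1 - g" unfolding g_def by simp
  have "invertible_upto a e q"
    unfolding invertible_upto_def
  proof (intro exI[of _ "L * Q"] conjI)
    have "P * (L * Q) * Q = (P * L) * (Q * Q)" by (simp only: mult.assoc)
    also have "\<dots> = L * Q" by (simp only: PL QQ)
    finally show "L * Q = (1 - e) * (L * Q) * (1 - q)"
      unfolding P_def[symmetric] Q_def[symmetric] by simp
    have "Q * a * P * (L * Q) = Q * (a * P * L) * Q" by (simp only: mult.assoc)
    also have "\<dots> = Q * (1 - g) * Q" by (simp only: aPL)
    also have "\<dots> = Q * Q - (Q * g) * Q" by (simp add: right_diff_distrib left_diff_distrib)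
    also have "\<dots> = Q" by (simp add: Qg QQ)
    finally show "(1 - q) * a * (1 - e) * (L * Q) = 1 - q" unfolding P_def Q_def .
    have "L * Q * Q * a * P = L * (Q * Q) * a * P" by (simp only: mult.assoc)
    also have "\<dots> = L * (1 - q) * a * P" by (simp only: QQ, simp only: Q_def)
    also have "\<dots> = L * a * P - L * q * a * P" by (simp add: right_diff_distrib left_diff_distrib)
    also have "L * q = 0"
    proof -
      have "L * q = L * (g * q)" by (simp only: gq)
      also have "\<dots> = (L * g) * q" by (simp only: mult.assoc)
      finally show ?thesis by (simp add: Lg)
    qed
    finally have "L * Q * Q * a * P = P" by (simp add: LaP)
    then show "L * Q * (1 - q) * a * (1 - e) = 1 - e" unfolding P_def Q_def .
  qed
  then show "fredholm_type F a" unfolding fredholm_type_def using e q qF by blast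
qed

end
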